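(* Let $d\ge1$ and $k\ge2$ be integers and $\alpha\in[0,1]$. Then \[ \rho(A_\alpha(B(d,k)))\le\alpha(d+1)+2(1-\alpha)\sqrt d\cos\left(\frac{\pi}{k+1}\right) \] and \[ \rho(A_\alpha(B(d,k)))>\alpha(d+1)+2(1-\alpha)\sqrt d\cos\left(\frac{\pi}{k}\right)-\frac{20\alpha\sqrt d}{k^3}. \]
   Context: For a graph $G$, $A(G)$ is the adjacency matrix, $D(G)$ the diagonal degree matrix, and $A_\alpha(G)=\alpha D(G)+(1-\alpha)A(G)$; $\rho(M)$ is the largest eigenvalue of a real symmetric nonnegative matrix $M$. In a rooted tree the level of a vertex is its distance to the root plus one. The Bethe tree $B(d,k)$ is the rooted tree with $k$ levels in which the root has degree $d$, every vertex at level $j$ with $2\le j\le k-1$ has degree $d+1$, and every vertex at level $k$ has degree $1$. *)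

theory Defs
  imports Complex_Main
begin

text \<open>A finite simple graph is given by a finite vertex set V and a symmetric irreflexive
adjacency relation E. Matrices indexed by V are functions V \<Rightarrow> V \<Rightarrow> real.\<close>

definition deg :: "'a set \<Rightarrow> ('a \<Rightarrow> 'a \<Rightarrow> bool) \<Rightarrow> 'a \<Rightarrow> nat" where
  "deg V E x = card {y \<in> V. E x y}"

definition adj_mat :: "('a \<Rightarrow> 'a \<Rightarrow> bool) \<Rightarrow> 'a \<Rightarrow> 'a \<Rightarrow> real" where
  "adj_mat E x y = (if E x y then 1 else 0)"

definition deg_mat :: "'a set \<Rightarrow> ('a \<Rightarrow> 'a \<Rightarrow> bool) \<Rightarrow> 'a \<Rightarrow> 'a \<Rightarrow> real" where
  "deg_mat V E x y = (if x = y then real (deg V E x) else 0)"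

definition A_alpha :: "real \<Rightarrow> 'a set \<Rightarrow> ('a \<Rightarrow> 'a \<Rightarrow> bool) \<Rightarrow> 'a \<Rightarrow> 'a \<Rightarrow> real" where
  "A_alpha \<alpha> V E x y = \<alpha> * deg_mat V E x y + (1 - \<alpha>) * adj_mat E x y"

definition is_eigenvalue :: "'a set \<Rightarrow> ('a \<Rightarrow> 'a \<Rightarrow> real) \<Rightarrow> real \<Rightarrow> bool" where
  "is_eigenvalue V M \<mu> \<longleftrightarrow>
     (\<exists>v :: 'a \<Rightarrow> real. (\<exists>x\<in>V. v x \<noteq> 0) \<and>
        (\<forall>x\<in>V. (\<Sum>y\<in>V. M x y * v y) = \<mu> * v x))"

definition largest_eigenvalue :: "'a set \<Rightarrow> ('a \<Rightarrow> 'a \<Rightarrow> real) \<Rightarrow> real" where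
  "largest_eigenvalue V M = Max {\<mu>. is_eigenvalue V M \<mu>}"

text \<open>Bethe tree B(d,k): vertices are words over {0..<d} of length < k (the empty word is
the root; a word of length j-1 is a vertex at level j); a vertex is adjacent to its
one-letter extensions and to its parent.\<close>

definition bethe_verts :: "nat \<Rightarrow> nat \<Rightarrow> nat list set" where
  "bethe_verts d k = {xs. length xs < k \<and> (\<forall>i\<in>set xs. i < d)}"

definition bethe_adj :: "nat \<Rightarrow> nat \<Rightarrow> nat list \<Rightarrow> nat list \<Rightarrow> bool" where
  "bethe_adj d k xs ys \<longleftrightarrow> xs \<in> bethe_verts d k \<and> ys \<in> bethe_verts d k \<and>
     ((\<exists>i<d. ys = xs @ [i]) \<or> (\<exists>i<d. xs = ys @ [i]))"

end

theory Submission imports Defs "HOL-Analysis.Complex_Transcendental" "Jordan_Normal_Form.Char_Poly"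
begin


lemma eigenvalues_finite:
  fixes V :: "'a set" and M :: "'a \<Rightarrow> 'a \<Rightarrow> real"
  assumes fin: "finite V"
  shows "finite {\<mu>. is_eigenvalue V M \<mu>}"
proof -
  obtain f where f: "bij_betw f {0..<card V} V" using ex_bij_betw_nat_finite[OF fin] by blast
  define n where "n = card V"
  define A where "A = mat n n (\<lambda>(i,j). M (f i) (f j))"
  have A: "A \<in> carrier_mat n n" unfolding A_def by auto
  have sub: "{\<mu>. is_eigenvalue V M \<mu>} \<subseteq> {\<mu>. poly (char_poly A) \<mu> = 0}"
  proof
    fix \<mu> assume "\<mu> \<in> {\<mu>. is_eigenvalue V M \<mu>}"
    then obtain v where v0: "\<exists>x\<in>V. v x \<noteq> 0" and ev: "\<forall>x\<in>V. (\<Sum>y\<in>V. M x y * v y) = \<mu> * v x"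
      unfolding is_eigenvalue_def by auto
    define u where "u = vec n (\<lambda>i. v (f i))"
    have "eigenvector A u \<mu>"
      unfolding eigenvector_def
    proof (intro conjI)
      show "u \<in> carrier_vec (dim_row A)" using A unfolding u_def by auto
      show "u \<noteq> 0\<^sub>v (dim_row A)"
      proof
        assume h: "u = 0\<^sub>v (dim_row A)"
        from v0 obtain x where x: "x \<in> V" "v x \<noteq> 0" by auto
        then obtain i where i: "i < n" "f i = x" using f unfolding n_def bij_betw_def by (metis atLeastLessThan_iff imageE)
        have "u $ i = 0" using h i A by auto
        thus False using i x unfolding u_def by auto
      qed
      show "A *\<^sub>v u = \<mu> \<cdot>\<^sub>v u"
      proof (rule eq_vecI)
        fix i assume "i < dim_vec (\<mu> \<cdot>\<^sub>v u)"
        hence i: "i < n" unfolding u_def by auto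
        have fi: "f i \<in> V" using f i unfolding n_def bij_betw_def by auto
        have "(A *\<^sub>v u) $ i = (\<Sum>j\<in>{0..<n}. M (f i) (f j) * v (f j))"
          using i A unfolding A_def u_def by (simp add: scalar_prod_def)
        also have "\<dots> = (\<Sum>y\<in>V. M (f i) y * v y)"
          using sum.reindex_bij_betw[OF f, of "\<lambda>y. M (f i) y * v y"] unfolding n_def by simp
        also have "\<dots> = \<mu> * v (f i)" using ev fi by auto
        finally show "(A *\<^sub>v u) $ i = (\<mu> \<cdot>\<^sub>v u) $ i" using i unfolding u_def by simp
      next
        show "dim_vec (A *\<^sub>v u) = dim_vec (\<mu> \<cdot>\<^sub>v u)" using A unfolding u_def by simp
      qed
    qed
    hence "eigenvalue A \<mu>" unfolding eigenvalue_def by auto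
    thus "\<mu> \<in> {\<mu>. poly (char_poly A) \<mu> = 0}" using eigenvalue_root_char_poly[OF A] by auto
  qed
  have "char_poly A \<noteq> 0" using degree_monic_char_poly[OF A] by (metis coeff_0 zero_neq_one)
  hence "finite {\<mu>. poly (char_poly A) \<mu> = 0}" by (rule poly_roots_finite)
  thus ?thesis using sub finite_subset by blast
qed



fun qq :: "(nat \<Rightarrow> real) \<Rightarrow> real \<Rightarrow> nat \<Rightarrow> real \<Rightarrow> real" where
  "qq a b 0 \<nu> = 0"
| "qq a b (Suc 0) \<nu> = 1"
| "qq a b (Suc (Suc i)) \<nu> = ((\<nu> - a i) * qq a b (Suc i) \<nu> - b * qq a b i \<nu>) / b"

fun QQ :: "(nat \<Rightarrow> real) \<Rightarrow> real \<Rightarrow> nat \<Rightarrow> real poly" where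
  "QQ a b 0 = 0"
| "QQ a b (Suc 0) = 1"
| "QQ a b (Suc (Suc i)) = Polynomial.smult (1/b) ([:- a i, 1:] * QQ a b (Suc i) - Polynomial.smult b (QQ a b i))"

lemma QQ_poly: "poly (QQ a b j) \<nu> = qq a b j \<nu>"
  by (induction a b j rule: QQ.induct) (auto simp: divide_inverse algebra_simps)

lemma qq_cont: "continuous_on S (qq a b j)"
proof -
  have "qq a b j = poly (QQ a b j)" using QQ_poly by auto
  thus ?thesis by (simp add: continuous_on_poly[OF continuous_on_id])
qed

lemma qq_large:
  assumes b: "b > 0" and h: "\<forall>i<j. a i + 2*b \<le> \<nu>"
  shows "qq a b j \<nu> \<le> qq a b (Suc j) \<nu> \<and> 1 \<le> qq a b (Suc j) \<nu>"
  using h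
proof (induction j)
  case 0 then show ?case by simp
next
  case (Suc j)
  hence IH: "qq a b j \<nu> \<le> qq a b (Suc j) \<nu>" "1 \<le> qq a b (Suc j) \<nu>" by auto
  have aj: "2*b \<le> \<nu> - a j" using Suc.prems by auto
  have "2*b * qq a b (Suc j) \<nu> \<le> (\<nu> - a j) * qq a b (Suc j) \<nu>"
    using aj IH(2) by (intro mult_right_mono) auto
  hence "b * qq a b (Suc j) \<nu> \<le> (\<nu> - a j) * qq a b (Suc j) \<nu> - b * qq a b j \<nu>"
    using IH(1) b mult_left_mono[OF IH(1), of b] by linarith
  hence "qq a b (Suc j) \<nu> \<le> qq a b (Suc (Suc j)) \<nu>"
    using b by (simp add: pos_le_divide_eq mult.commute)
  thus ?case using IH by auto
qed

lemma qq_eventually_pos: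
  assumes b: "b > 0"
  shows "\<exists>K. \<forall>\<nu>\<ge>K. 1 \<le> qq a b (Suc j) \<nu>"
proof -
  define K where "K = (\<Sum>i<j. \<bar>a i\<bar>) + 2*b"
  have "\<forall>\<nu>\<ge>K. 1 \<le> qq a b (Suc j) \<nu>"
  proof (intro allI impI)
    fix \<nu> assume "\<nu> \<ge> K"
    have "\<forall>i<j. a i + 2*b \<le> \<nu>"
    proof (intro allI impI)
      fix i assume "i < j"
      hence "\<bar>a i\<bar> \<le> (\<Sum>i<j. \<bar>a i\<bar>)" by (intro member_le_sum) auto
      thus "a i + 2*b \<le> \<nu>" using \<open>\<nu> \<ge> K\<close> unfolding K_def by linarith
    qed
    thus "1 \<le> qq a b (Suc j) \<nu>" using qq_large[OF b] by blast
  qed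
  thus ?thesis by blast
qed

lemma sturm:
  assumes b: "b > 0"
  shows "\<exists>\<theta>. qq a b (j+2) \<theta> = 0 \<and> (\<forall>\<nu>>\<theta>. qq a b (j+2) \<nu> > 0)
          \<and> (\<forall>\<nu>\<ge>\<theta>. \<forall>i. 1 \<le> i \<and> i \<le> j+1 \<longrightarrow> qq a b i \<nu> > 0)"
proof (induction j)
  case 0
  have "qq a b (0+2) (a 0) = 0" by (simp add: numeral_2_eq_2)
  moreover have "\<forall>\<nu>>a 0. qq a b (0+2) \<nu> > 0" using b by (simp add: numeral_2_eq_2)
  moreover have "\<forall>\<nu>\<ge>a 0. \<forall>i. 1 \<le> i \<and> i \<le> 0+1 \<longrightarrow> qq a b i \<nu> > 0"
    by (auto simp: le_Suc_eq)
  ultimately show ?case by blast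
next
  case (Suc j)
  then obtain \<theta> where th: "qq a b (j+2) \<theta> = 0" "\<forall>\<nu>>\<theta>. qq a b (j+2) \<nu> > 0"
    "\<forall>\<nu>\<ge>\<theta>. \<forall>i. 1 \<le> i \<and> i \<le> j+1 \<longrightarrow> qq a b i \<nu> > 0" by blast
  define p where "p = qq a b (j+3)"
  have pcont: "\<And>S. continuous_on S p" unfolding p_def by (rule qq_cont)
  have "qq a b (j+1) \<theta> > 0" using th(3) by auto
  moreover have "p \<theta> = - qq a b (j+1) \<theta>"
    using th(1) b unfolding p_def by (simp add: numeral_3_eq_3 numeral_2_eq_2)
  ultimately have pth: "p \<theta> < 0" by simp
  obtain K where K: "\<forall>\<nu>\<ge>K. 1 \<le> p \<nu>" using qq_eventually_pos[OF b, of a "j+2"]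
    unfolding p_def by (auto simp: numeral_3_eq_3)
  have QQne: "QQ a b (j+3) \<noteq> 0"
  proof
    assume "QQ a b (j+3) = 0"
    hence "p K = 0" unfolding p_def using QQ_poly[of a b "j+3" K] by simp
    thus False using K by auto
  qed
  have fin: "finite {z. p z = 0}" unfolding p_def
    using poly_roots_finite[OF QQne] QQ_poly[of a b "j+3"] by simp
  define R where "R = {z. p z = 0 \<and> \<theta> \<le> z}"
  have finR: "finite R" using fin unfolding R_def by (rule rev_finite_subset) auto
  have rootafter: "\<exists>z. z \<ge> x \<and> p z = 0" if "p x \<le> 0" for x
  proof -
    have "1 \<le> p (max K x)" using K by auto
    hence "p x \<le> 0" "0 \<le> p (max K x)" "x \<le> max K x" using that by auto
    from IVT'[of p x 0 "max K x", OF this pcont] show ?thesis by auto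
  qed
  obtain z0 where z0: "z0 \<ge> \<theta>" "p z0 = 0" using rootafter[of \<theta>] pth by auto
  hence Rne: "R \<noteq> {}" unfolding R_def by auto
  define \<theta>' where "\<theta>' = Max R"
  have th'R: "\<theta>' \<in> R" unfolding \<theta>'_def using finR Rne by (rule Max_in)
  have th'max: "\<And>z. z \<in> R \<Longrightarrow> z \<le> \<theta>'" unfolding \<theta>'_def using finR by auto
  have p0: "p \<theta>' = 0" and ge: "\<theta> \<le> \<theta>'" using th'R unfolding R_def by auto
  have gt: "\<theta> < \<theta>'" using ge p0 pth by (cases "\<theta> = \<theta>'") auto
  have pos: "\<forall>\<nu>>\<theta>'. p \<nu> > 0"
  proof (intro allI impI)
    fix \<nu> assume nu: "\<nu> > \<theta>'"
    show "p \<nu> > 0"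
    proof (rule ccontr)
      assume "\<not> p \<nu> > 0"
      then obtain z where "z \<ge> \<nu>" "p z = 0" using rootafter[of \<nu>] by auto
      hence "z \<in> R" unfolding R_def using nu ge by auto
      thus False using th'max \<open>z \<ge> \<nu>\<close> nu by fastforce
    qed
  qed
  have "\<forall>\<nu>\<ge>\<theta>'. \<forall>i. 1 \<le> i \<and> i \<le> Suc j+1 \<longrightarrow> qq a b i \<nu> > 0"
  proof (intro allI impI)
    fix \<nu> i assume nu: "\<nu> \<ge> \<theta>'" and i: "1 \<le> i \<and> i \<le> Suc j + 1"
    show "qq a b i \<nu> > 0"
    proof (cases "i = j+2")
      case True thus ?thesis using th(2) nu gt by auto
    next
      case False thus ?thesis using th(3) nu gt i by auto
    qed
  qed
  moreover have "qq a b (Suc j+2) \<theta>' = 0" using p0 unfolding p_def by (simp add: numeral_3_eq_3 numeral_2_eq_2)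
  moreover have "\<forall>\<nu>>\<theta>'. qq a b (Suc j+2) \<nu> > 0" using pos unfolding p_def by (simp add: numeral_3_eq_3 numeral_2_eq_2)
  ultimately show ?case by blast
qed

lemma ldl_identity:
  assumes b: "b > 0" and nz: "\<forall>i\<le>Suc m. qq a b (Suc i) \<nu> \<noteq> 0"
  defines "e \<equiv> \<lambda>i. b * qq a b (Suc (Suc i)) \<nu> / qq a b (Suc i) \<nu>"
  shows "(\<Sum>i<Suc m. (\<nu> - a i) * t i ^ 2) - 2*b*(\<Sum>i<m. t i * t (Suc i))
       = (\<Sum>i<m. e i * (t i - b / e i * t (Suc i)) ^ 2) + e m * t m ^ 2"
  using nz
proof (induction m)
  case 0
  have "e 0 = \<nu> - a 0" unfolding e_def using b by simp
  thus ?case by simp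
next
  case (Suc m)
  have IH: "(\<Sum>i<Suc m. (\<nu> - a i) * t i ^ 2) - 2*b*(\<Sum>i<m. t i * t (Suc i))
       = (\<Sum>i<m. e i * (t i - b / e i * t (Suc i)) ^ 2) + e m * t m ^ 2"
    using Suc by auto
  have n1: "qq a b (Suc m) \<nu> \<noteq> 0" "qq a b (Suc (Suc m)) \<nu> \<noteq> 0" using Suc.prems by (auto simp del: qq.simps)
  have "b * qq a b (Suc (Suc m)) \<nu> / qq a b (Suc m) \<nu> \<noteq> 0" using b n1 by (simp del: qq.simps)
  hence em: "e m \<noteq> 0" unfolding e_def by simp
  have r3: "qq a b (Suc (Suc (Suc m))) \<nu> = ((\<nu> - a (Suc m)) * qq a b (Suc (Suc m)) \<nu> - b * qq a b (Suc m) \<nu>) / b"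
    by (rule qq.simps(3))
  have rel: "e (Suc m) = \<nu> - a (Suc m) - b^2 / e m"
    unfolding e_def r3 using n1 b by (simp del: qq.simps add: field_simps power2_eq_square)
  have key: "e m * t m ^ 2 + (\<nu> - a (Suc m)) * t (Suc m) ^ 2 - 2*b*(t m * t (Suc m))
     = e m * (t m - b / e m * t (Suc m)) ^ 2 + e (Suc m) * t (Suc m) ^ 2"
    unfolding rel using em by (simp add: field_simps power2_eq_square)
  show ?case using IH key by (simp add: algebra_simps)
qed

lemma posdef:
  assumes b: "b > 0" and n: "n \<ge> 1" and pos: "\<forall>i. 1 \<le> i \<and> i \<le> Suc n \<longrightarrow> qq a b i \<nu> > 0"
    and t0: "t 0 \<noteq> 0"
  shows "(\<Sum>i<n. (\<nu> - a i) * t i ^ 2) - 2*b*(\<Sum>i<n-1. t i * t (Suc i)) > 0"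
proof -
  obtain m where m: "n = Suc m" using n by (cases n) auto
  define e where "e \<equiv> \<lambda>i. b * qq a b (Suc (Suc i)) \<nu> / qq a b (Suc i) \<nu>"
  have epos: "e i > 0" if "i \<le> m" for i
    unfolding e_def using pos that m b by (intro divide_pos_pos mult_pos_pos) auto
  have id: "(\<Sum>i<Suc m. (\<nu> - a i) * t i ^ 2) - 2*b*(\<Sum>i<m. t i * t (Suc i))
       = (\<Sum>i<m. e i * (t i - b / e i * t (Suc i)) ^ 2) + e m * t m ^ 2"
    unfolding e_def using ldl_identity[OF b, of m a \<nu> t] pos m by force
  have nn: "\<forall>i\<in>{..<m}. 0 \<le> e i * (t i - b / e i * t (Suc i)) ^ 2"
  proof
    fix i assume "i \<in> {..<m}"
    thus "0 \<le> e i * (t i - b / e i * t (Suc i)) ^ 2" using epos[of i] by simp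
  qed
  have s0: "(\<Sum>i<m. e i * (t i - b / e i * t (Suc i)) ^ 2) \<ge> 0"
  proof (rule sum_nonneg)
    fix i assume "i \<in> {..<m}"
    thus "0 \<le> e i * (t i - b / e i * t (Suc i)) ^ 2" using epos[of i] by simp
  qed
  have l0: "e m * t m ^ 2 \<ge> 0" using epos[of m] by simp
  show ?thesis
  proof (rule ccontr)
    assume "\<not> ?thesis"
    hence le: "(\<Sum>i<m. e i * (t i - b / e i * t (Suc i)) ^ 2) + e m * t m ^ 2 \<le> 0"
      using id m by simp
    hence S: "(\<Sum>i<m. e i * (t i - b / e i * t (Suc i)) ^ 2) = 0" and L: "e m * t m ^ 2 = 0"
      using s0 l0 by linarith+
    have each: "\<forall>i<m. e i * (t i - b / e i * t (Suc i)) ^ 2 = 0"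
      using S nn sum_nonneg_eq_0_iff[of "{..<m}" "\<lambda>i. e i * (t i - b / e i * t (Suc i)) ^ 2"] by auto
    have tm: "t m = 0" using L epos[of m] by simp
    have "\<forall>j\<le>m. t (m - j) = 0"
    proof (intro allI impI)
      fix j assume "j \<le> m"
      thus "t (m - j) = 0"
      proof (induction j)
        case 0 thus ?case using tm by simp
      next
        case (Suc j)
        hence h: "t (m - j) = 0" by simp
        define i where "i = m - Suc j"
        have i: "i < m" "Suc i = m - j" using Suc.prems unfolding i_def by auto
        have "e i * (t i - b / e i * t (Suc i)) ^ 2 = 0" using each i by auto
        hence "t i - b / e i * t (Suc i) = 0" using epos[of i] i by simp
        thus ?case using h i unfolding i_def by simp
      qed
    qed
    thus False using t0 by (metis diff_self_eq_0 order_refl)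
  qed
qed

lemma sturm_eig:
  assumes b: "b > 0" and n: "n \<ge> 1" and t0: "t 0 \<noteq> 0"
    and G: "(\<Sum>i<n. (\<mu> - a i) * t i ^ 2) - 2*b*(\<Sum>i<n-1. t i * t (Suc i)) \<le> 0"
  shows "\<exists>\<theta>\<ge>\<mu>. qq a b (Suc n) \<theta> = 0"
proof -
  obtain \<theta> where th: "qq a b (n-1+2) \<theta> = 0" "\<forall>\<nu>>\<theta>. qq a b (n-1+2) \<nu> > 0"
          "\<forall>\<nu>\<ge>\<theta>. \<forall>i. 1 \<le> i \<and> i \<le> n-1+1 \<longrightarrow> qq a b i \<nu> > 0"
    using sturm[OF b, of a "n-1"] by blast
  have e: "n-1+2 = Suc n" "n-1+1 = n" using n by auto
  have "\<theta> \<ge> \<mu>"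
  proof (rule ccontr)
    assume "\<not> \<theta> \<ge> \<mu>"
    hence "\<forall>i. 1 \<le> i \<and> i \<le> Suc n \<longrightarrow> qq a b i \<mu> > 0"
      using th e by (metis le_Suc_eq less_eq_real_def linorder_not_le)
    from posdef[of b n a \<mu> t] b n this t0 G show False by simp
  qed
  thus ?thesis using th e by auto
qed



lemma bethe_finite: "finite (bethe_verts d k)"
proof -
  have "bethe_verts d k \<subseteq> {xs. set xs \<subseteq> {..<d} \<and> length xs \<le> k}"
    unfolding bethe_verts_def by auto
  thus ?thesis using finite_lists_length_le[of "{..<d}" k] finite_subset by blast
qed

lemma bethe_nbrs:
  assumes x: "x \<in> bethe_verts d k"
  shows "{y \<in> bethe_verts d k. bethe_adj d k x y}
       = (if length x + 1 < k then (\<lambda>j. x @ [j]) ` {..<d} else {}) \<union> (if x \<noteq> [] then {butlast x} else {})"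
    (is "?L = ?C \<union> ?P")
proof (intro equalityI subsetI)
  fix y assume "y \<in> ?L"
  hence y: "y \<in> bethe_verts d k" "(\<exists>i<d. y = x @ [i]) \<or> (\<exists>i<d. x = y @ [i])"
    unfolding bethe_adj_def by auto
  show "y \<in> ?C \<union> ?P"
  proof (cases "\<exists>i<d. y = x @ [i]")
    case True
    then obtain i where i: "i < d" "y = x @ [i]" by auto
    hence "length x + 1 < k" using y(1) unfolding bethe_verts_def by auto
    thus ?thesis using i by auto
  next
    case False
    then obtain i where i: "i < d" "x = y @ [i]" using y by auto
    thus ?thesis by auto
  qed
next
  fix y assume y: "y \<in> ?C \<union> ?P"
  show "y \<in> ?L"
  proof (cases "y \<in> ?C")
    case True
    then obtain i where i: "i < d" "y = x @ [i]" "length x + 1 < k" by (auto split: if_splits)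
    hence "y \<in> bethe_verts d k" using x unfolding bethe_verts_def by auto
    thus ?thesis using i x unfolding bethe_adj_def by auto
  next
    case False
    hence xn: "x \<noteq> []" "y = butlast x" using y by (auto split: if_splits)
    hence xy: "x = y @ [last x]" by simp
    have "last x < d" using x xn unfolding bethe_verts_def by auto
    moreover have "y \<in> bethe_verts d k" using x xn unfolding bethe_verts_def
      by (auto dest: in_set_butlastD)
    ultimately show ?thesis using xy x unfolding bethe_adj_def by blast
  qed
qed

lemma tree_sum:
  assumes x: "x \<in> bethe_verts d k"
  shows "(\<Sum>y\<in>bethe_verts d k. A_alpha \<alpha> (bethe_verts d k) (bethe_adj d k) x y * f (length y))
    = \<alpha> * ((if length x + 1 < k then real d else 0) + (if x \<noteq> [] then 1 else 0)) * f (length x)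
      + (1-\<alpha>) * ((if length x + 1 < k then real d * f (Suc (length x)) else 0)
                  + (if x \<noteq> [] then f (length x - 1) else 0))"
proof -
  let ?V = "bethe_verts d k" and ?E = "bethe_adj d k"
  let ?C = "(if length x + 1 < k then (\<lambda>j. x @ [j]) ` {..<d} else {})"
  let ?P = "(if x \<noteq> [] then {butlast x} else {})"
  have fin: "finite ?V" by (rule bethe_finite)
  have N: "{y \<in> ?V. ?E x y} = ?C \<union> ?P" by (rule bethe_nbrs[OF x])
  have disj: "?C \<inter> ?P = {}" by (auto dest: arg_cong[of _ _ length])
  have injC: "inj_on (\<lambda>j. x @ [j]) {..<d}" by (auto simp: inj_on_def)
  have cardC: "card ?C = (if length x + 1 < k then d else 0)"
    using card_image[OF injC] by auto
  have cardP: "card ?P = (if x \<noteq> [] then 1 else 0)" by auto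
  have deg: "real (deg ?V ?E x) = (if length x + 1 < k then real d else 0) + (if x \<noteq> [] then 1 else 0)"
    unfolding deg_def N using card_Un_disjoint[of ?C ?P] disj cardC cardP by auto
  have sC: "(\<Sum>y\<in>?C. f (length y)) = (if length x + 1 < k then real d * f (Suc (length x)) else 0)"
    using sum.reindex[OF injC, of "\<lambda>y. f (length y)"] by auto
  have sP: "(\<Sum>y\<in>?P. f (length y)) = (if x \<noteq> [] then f (length x - 1) else 0)" by auto
  have adj: "(\<Sum>y\<in>?V. Defs.adj_mat ?E x y * f (length y)) = (\<Sum>y\<in>{y \<in> ?V. ?E x y}. f (length y))"
    unfolding Defs.adj_mat_def by (simp add: sum.inter_filter[OF fin]) (rule sum.cong, auto)
  also have "\<dots> = (\<Sum>y\<in>?C. f (length y)) + (\<Sum>y\<in>?P. f (length y))"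
    unfolding N by (rule sum.union_disjoint) (auto dest: arg_cong[of _ _ length])
  finally have adj': "(\<Sum>y\<in>?V. Defs.adj_mat ?E x y * f (length y)) = 
     (if length x + 1 < k then real d * f (Suc (length x)) else 0) + (if x \<noteq> [] then f (length x - 1) else 0)"
    using sC sP by simp
  have dm: "(\<Sum>y\<in>?V. deg_mat ?V ?E x y * f (length y)) = real (deg ?V ?E x) * f (length x)"
  proof -
    have "(\<Sum>y\<in>?V. deg_mat ?V ?E x y * f (length y)) = (\<Sum>y\<in>?V. if x = y then real (deg ?V ?E x) * f (length y) else 0)"
      unfolding deg_mat_def by (rule sum.cong) auto
    also have "\<dots> = real (deg ?V ?E x) * f (length x)" using x fin by (simp add: sum.delta)
    finally show ?thesis .
  qed
  have "(\<Sum>y\<in>?V. A_alpha \<alpha> ?V ?E x y * f (length y))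
     = \<alpha> * (\<Sum>y\<in>?V. deg_mat ?V ?E x y * f (length y)) + (1-\<alpha>) * (\<Sum>y\<in>?V. Defs.adj_mat ?E x y * f (length y))"
    unfolding A_alpha_def sum_distrib_left sum.distrib[symmetric] by (rule sum.cong) (auto simp: algebra_simps)
  thus ?thesis using dm adj' deg by simp
qed

definition degl :: "nat \<Rightarrow> nat \<Rightarrow> nat \<Rightarrow> real" where
  "degl d k i = (if i + 1 < k then real d else 0) + (if 0 < i then 1 else 0)"

lemma tree_sum_scaled:
  assumes x: "x \<in> bethe_verts d k" and d: "d \<ge> 1"
  shows "(\<Sum>y\<in>bethe_verts d k. A_alpha \<alpha> (bethe_verts d k) (bethe_adj d k) x y * (T (length y) / sqrt d ^ length y))
    = (\<alpha> * degl d k (length x) * T (length x)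
      + (1-\<alpha>) * ((if length x + 1 < k then sqrt d * T (Suc (length x)) else 0)
                  + (if 0 < length x then sqrt d * T (length x - 1) else 0))) / sqrt d ^ length x"
proof -
  let ?i = "length x"
  let ?s = "sqrt (real d)"
  have s: "?s > 0" using d by simp
  have ss: "real d = ?s * ?s" using d by simp
  have c1: "(if ?i + 1 < k then real d * (T (Suc ?i) / ?s ^ Suc ?i) else 0)
        = (if ?i + 1 < k then ?s * T (Suc ?i) else 0) / ?s ^ ?i"
    using s by (subst ss) (auto simp: field_simps)
  have c2: "(if x \<noteq> [] then T (?i - 1) / ?s ^ (?i - 1) else 0)
        = (if 0 < ?i then ?s * T (?i - 1) else 0) / ?s ^ ?i"
  proof (cases "?i")
    case 0 thus ?thesis by simp
  next
    case (Suc m) thus ?thesis using s by (auto simp: field_simps)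
  qed
  show ?thesis
    unfolding tree_sum[OF x, of \<alpha> "\<lambda>n. T n / sqrt d ^ n"] c1 c2 degl_def
    using s by (simp add: field_simps)
qed

lemma lift_eig:
  assumes d: "d \<ge> 1" and nz: "\<exists>i<k. T i \<noteq> 0"
    and eq: "\<forall>i<k. \<alpha> * degl d k i * T i
      + (1-\<alpha>) * ((if i + 1 < k then sqrt d * T (Suc i) else 0)
                  + (if 0 < i then sqrt d * T (i - 1) else 0)) = \<theta> * T i"
  shows "is_eigenvalue (bethe_verts d k) (A_alpha \<alpha> (bethe_verts d k) (bethe_adj d k)) \<theta>"
  unfolding is_eigenvalue_def
proof (intro exI conjI)
  let ?v = "\<lambda>xs. T (length xs) / sqrt d ^ length xs"
  have s: "sqrt (real d) > 0" using d by simp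
  from nz obtain i where i: "i < k" "T i \<noteq> 0" by auto
  have "replicate i 0 \<in> bethe_verts d k" using i d unfolding bethe_verts_def by auto
  moreover have "?v (replicate i 0) \<noteq> 0" using i s by simp
  ultimately show "\<exists>x\<in>bethe_verts d k. ?v x \<noteq> 0" by blast
  show "\<forall>x\<in>bethe_verts d k. (\<Sum>y\<in>bethe_verts d k. A_alpha \<alpha> (bethe_verts d k) (bethe_adj d k) x y * ?v y) = \<theta> * ?v x"
  proof
    fix x assume x: "x \<in> bethe_verts d k"
    hence "length x < k" unfolding bethe_verts_def by auto
    hence e: "\<alpha> * degl d k (length x) * T (length x)
      + (1-\<alpha>) * ((if length x + 1 < k then sqrt d * T (Suc (length x)) else 0)
                  + (if 0 < length x then sqrt d * T (length x - 1) else 0)) = \<theta> * T (length x)"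
      using eq by blast
    show "(\<Sum>y\<in>bethe_verts d k. A_alpha \<alpha> (bethe_verts d k) (bethe_adj d k) x y * ?v y) = \<theta> * ?v x"
      unfolding tree_sum_scaled[OF x d] e by simp
  qed
qed

lemma eig_upper:
  fixes V :: "'a set" and M :: "'a \<Rightarrow> 'a \<Rightarrow> real"
  assumes fin: "finite V" and nn: "\<forall>x\<in>V. \<forall>y\<in>V. M x y \<ge> 0" and wpos: "\<forall>x\<in>V. w x > 0"
    and sup: "\<forall>x\<in>V. (\<Sum>y\<in>V. M x y * w y) \<le> lam * w x"
    and ev: "is_eigenvalue V M \<mu>"
  shows "\<mu> \<le> lam"
proof -
  obtain v where v0: "\<exists>x\<in>V. v x \<noteq> 0" and eq: "\<forall>x\<in>V. (\<Sum>y\<in>V. M x y * v y) = \<mu> * v x"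
    using ev unfolding is_eigenvalue_def by auto
  define g where "g x = \<bar>v x\<bar> / w x" for x
  have Vne: "V \<noteq> {}" using v0 by auto
  have "Max (g ` V) \<in> g ` V" using fin Vne by auto
  then obtain x0 where x0: "x0 \<in> V" "g x0 = Max (g ` V)" by auto
  have gmax: "\<forall>y\<in>V. g y \<le> g x0" using x0 fin by auto
  define c where "c = g x0"
  from v0 obtain x1 where x1: "x1 \<in> V" "v x1 \<noteq> 0" by auto
  have "g x1 > 0" using x1 wpos unfolding g_def by auto
  hence cpos: "c > 0" using gmax x1 unfolding c_def by force
  have vx0: "\<bar>v x0\<bar> = c * w x0" unfolding c_def g_def using wpos x0 by auto
  have bnd: "\<bar>v y\<bar> \<le> c * w y" if "y \<in> V" for y
    using gmax that wpos unfolding c_def g_def by (auto simp: divide_le_eq)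
  have "\<bar>\<mu>\<bar> * \<bar>v x0\<bar> = \<bar>\<Sum>y\<in>V. M x0 y * v y\<bar>" using eq x0 by (simp add: abs_mult)
  also have "\<dots> \<le> (\<Sum>y\<in>V. \<bar>M x0 y * v y\<bar>)" by (rule sum_abs)
  also have "\<dots> \<le> (\<Sum>y\<in>V. M x0 y * (c * w y))"
  proof (rule sum_mono)
    fix y assume y: "y \<in> V"
    have "\<bar>M x0 y * v y\<bar> = M x0 y * \<bar>v y\<bar>" using nn x0 y by (simp add: abs_mult)
    also have "\<dots> \<le> M x0 y * (c * w y)" using bnd[OF y] nn x0 y by (intro mult_left_mono) auto
    finally show "\<bar>M x0 y * v y\<bar> \<le> M x0 y * (c * w y)" .
  qed
  also have "\<dots> = c * (\<Sum>y\<in>V. M x0 y * w y)" by (simp add: sum_distrib_left algebra_simps)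
  also have "\<dots> \<le> c * (lam * w x0)" using sup x0 cpos by (intro mult_left_mono) auto
  also have "\<dots> = lam * \<bar>v x0\<bar>" using vx0 by simp
  finally have "\<bar>\<mu>\<bar> * \<bar>v x0\<bar> \<le> lam * \<bar>v x0\<bar>" .
  moreover have "\<bar>v x0\<bar> > 0" using vx0 cpos wpos x0 by simp
  ultimately have "\<bar>\<mu>\<bar> \<le> lam" by simp
  thus ?thesis by simp
qed


lemma pi_sq_lt: "pi * pi < 10"
proof -
  have "pi \<le> 3.1415926535899" by (rule pi_approx(2))
  moreover have "0 < pi" by simp
  ultimately have "pi * pi \<le> 3.1415926535899 * 3.1415926535899"
    by (intro mult_mono) auto
  thus ?thesis by simp
qed

lemma cos_sum_tele:
  "2 * sin h * (\<Sum>j<N. cos (x + 2 * real j * h)) = sin (x + (2 * real N - 1) * h) - sin (x - h)"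
proof (induction N)
  case 0 thus ?case by simp
next
  case (Suc N)
  have e1: "x + (2 * real (Suc N) - 1) * h = (x + 2 * real N * h) + h" by (simp add: algebra_simps)
  have e2: "x + (2 * real N - 1) * h = (x + 2 * real N * h) - h" by (simp add: algebra_simps)
  have "2 * sin h * cos (x + 2 * real N * h) = sin ((x + 2 * real N * h) + h) - sin ((x + 2 * real N * h) - h)"
    using cos_times_sin[of "x + 2 * real N * h" h] by (simp add: algebra_simps)
  thus ?case using Suc by (simp add: e1 e2 algebra_simps)
qed

lemma sumsq:
  assumes k: "k \<ge> 2"
  shows "(\<Sum>i<k. sin ((real i + 1) * (pi / real k)) ^ 2) = real k / 2"
proof -
  define h where "h = pi / real k"
  have kh: "real k * h = pi" unfolding h_def using k by simp
  have h0: "0 < h" "h < pi" unfolding h_def using k by (auto simp: field_simps)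
  have sh: "sin h > 0" using h0 by (intro sin_gt_zero) auto
  have "2 * sin h * (\<Sum>j<k. cos (2*h + 2 * real j * h)) = sin (2*h + (2 * real k - 1) * h) - sin (2*h - h)"
    by (rule cos_sum_tele)
  also have "2*h + (2 * real k - 1) * h = h + 2 * pi" using kh by (simp add: algebra_simps)
  finally have "2 * sin h * (\<Sum>j<k. cos (2*h + 2 * real j * h)) = 0" by (simp add: sin_periodic)
  hence cs: "(\<Sum>j<k. cos (2*h + 2 * real j * h)) = 0" using sh by simp
  have "(\<Sum>i<k. sin ((real i + 1) * h) ^ 2) = (\<Sum>i<k. (1 - cos (2*h + 2 * real i * h)) / 2)"
  proof (rule sum.cong)
    fix i assume "i \<in> {..<k}"
    have "cos (2 * ((real i + 1) * h)) = 1 - 2 * sin ((real i + 1) * h) ^ 2" by (rule cos_double_sin)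
    moreover have "2 * ((real i + 1) * h) = 2*h + 2 * real i * h" by (simp add: algebra_simps)
    ultimately show "sin ((real i + 1) * h) ^ 2 = (1 - cos (2*h + 2 * real i * h)) / 2" by simp
  qed simp
  also have "\<dots> = real k / 2 - (\<Sum>i<k. cos (2*h + 2 * real i * h)) / 2"
    by (simp add: sum_divide_distrib[symmetric] sum_subtractf)
  finally show ?thesis using cs unfolding h_def by simp
qed

lemma sumprod:
  assumes k: "k \<ge> 2"
  shows "2 * (\<Sum>i<k-1. sin ((real i + 1) * (pi / real k)) * sin ((real (Suc i) + 1) * (pi / real k)))
     = real k * cos (pi / real k)"
proof -
  define h where "h = pi / real k"
  have kh: "real k * h = pi" unfolding h_def using k by simp
  have h0: "0 < h" "h < pi" unfolding h_def using k by (auto simp: field_simps)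
  have sh: "sin h > 0" using h0 by (intro sin_gt_zero) auto
  have rk: "real (k - 1) = real k - 1" using k by (simp add: of_nat_diff)
  have "2 * sin h * (\<Sum>j<k-1. cos (3*h + 2 * real j * h)) = sin (3*h + (2 * real (k-1) - 1) * h) - sin (3*h - h)"
    by (rule cos_sum_tele)
  also have "3*h + (2 * real (k-1) - 1) * h = 2 * pi" using kh rk by (simp add: algebra_simps)
  also have "3*h - h = 2 * h" by simp
  finally have "2 * sin h * (\<Sum>j<k-1. cos (3*h + 2 * real j * h)) = - (2 * sin h * cos h)"
    by (simp add: sin_double)
  hence "sin h * ((\<Sum>j<k-1. cos (3*h + 2 * real j * h)) + cos h) = 0" by (simp add: algebra_simps)
  hence cs: "(\<Sum>j<k-1. cos (3*h + 2 * real j * h)) = - cos h" using sh by simp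
  have "(\<Sum>i<k-1. 2 * (sin ((real i + 1) * h) * sin ((real (Suc i) + 1) * h)))
      = (\<Sum>i<k-1. cos h - cos (3*h + 2 * real i * h))"
  proof (rule sum.cong)
    fix i assume "i \<in> {..<k-1}"
    have "sin ((real i + 1) * h) * sin ((real (Suc i) + 1) * h)
       = (cos ((real i + 1) * h - (real (Suc i) + 1) * h) - cos ((real i + 1) * h + (real (Suc i) + 1) * h)) / 2"
      by (rule sin_times_sin)
    moreover have "(real i + 1) * h - (real (Suc i) + 1) * h = - h" by (simp add: algebra_simps)
    moreover have "(real i + 1) * h + (real (Suc i) + 1) * h = 3*h + 2 * real i * h" by (simp add: algebra_simps)
    ultimately show "2 * (sin ((real i + 1) * h) * sin ((real (Suc i) + 1) * h)) = cos h - cos (3*h + 2 * real i * h)"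
      by simp
  qed simp
  also have "\<dots> = real (k-1) * cos h - (\<Sum>i<k-1. cos (3*h + 2 * real i * h))"
    by (simp add: sum_subtractf)
  also have "\<dots> = real k * cos h" using cs rk by (simp add: algebra_simps)
  finally show ?thesis unfolding h_def by (simp add: sum_distrib_left)
qed

lemma CP:
  assumes i: "i < k"
  defines "\<phi> \<equiv> pi / real (k + 1)"
  shows "(if i + 1 < k then s * sin ((real (Suc i) + 1) * \<phi>) else 0)
       + (if 0 < i then s * sin ((real (i - 1) + 1) * \<phi>) else 0)
       = 2 * s * cos \<phi> * sin ((real i + 1) * \<phi>)"
proof -
  have C: "(if i + 1 < k then s * sin ((real (Suc i) + 1) * \<phi>) else 0) = s * sin ((real i + 2) * \<phi>)"
  proof (cases "i + 1 < k")
    case True thus ?thesis by (simp add: algebra_simps)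
  next
    case False
    hence "i + 1 = k" using i by simp
    hence "(real i + 2) * \<phi> = pi" unfolding \<phi>_def by (auto simp: field_simps)
    thus ?thesis using False by simp
  qed
  have P: "(if 0 < i then s * sin ((real (i - 1) + 1) * \<phi>) else 0) = s * sin (real i * \<phi>)"
  proof (cases "0 < i")
    case True thus ?thesis by (simp add: of_nat_diff)
  next
    case False thus ?thesis by simp
  qed
  have "sin ((real i + 1) * \<phi>) * cos \<phi> = (sin ((real i + 1) * \<phi> + \<phi>) + sin ((real i + 1) * \<phi> - \<phi>)) / 2"
    by (rule sin_times_cos)
  moreover have "(real i + 1) * \<phi> + \<phi> = (real i + 2) * \<phi>" "(real i + 1) * \<phi> - \<phi> = real i * \<phi>"
    by (simp_all add: algebra_simps)
  ultimately have "sin (real i * \<phi>) + sin ((real i + 2) * \<phi>) = 2 * cos \<phi> * sin ((real i + 1) * \<phi>)"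
    by (simp add: algebra_simps)
  hence "s * (sin (real i * \<phi>) + sin ((real i + 2) * \<phi>)) = s * (2 * cos \<phi> * sin ((real i + 1) * \<phi>))"
    by simp
  thus ?thesis unfolding C P by (simp add: algebra_simps)
qed


lemma A_nonneg:
  assumes "0 \<le> \<alpha>" "\<alpha> \<le> 1"
  shows "A_alpha \<alpha> V E x y \<ge> 0"
  using assms unfolding A_alpha_def deg_mat_def Defs.adj_mat_def by auto

lemma upper_bound:
  assumes d: "d \<ge> 1" and k: "k \<ge> 2" and a0: "0 \<le> \<alpha>" and a1: "\<alpha> \<le> 1"
    and ev: "is_eigenvalue (bethe_verts d k) (A_alpha \<alpha> (bethe_verts d k) (bethe_adj d k)) \<mu>"
  shows "\<mu> \<le> \<alpha> * (real d + 1) + 2 * (1 - \<alpha>) * sqrt (real d) * cos (pi / real (k + 1))"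
proof -
  define \<phi> where "\<phi> = pi / real (k+1)"
  define S where "S i = sin ((real i + 1) * \<phi>)" for i
  define up where "up = \<alpha> * (real d + 1) + 2 * (1 - \<alpha>) * sqrt (real d) * cos \<phi>"
  have s: "sqrt (real d) > 0" using d by simp
  have Spos: "S i > 0" if "i < k" for i
  proof -
    have "0 < (real i + 1) * \<phi>" unfolding \<phi>_def by simp
    moreover have "(real i + 1) * \<phi> < pi" unfolding \<phi>_def using that by (simp add: field_simps)
    ultimately show ?thesis unfolding S_def by (rule sin_gt_zero)
  qed
  have "\<mu> \<le> up"
  proof (rule eig_upper[OF bethe_finite _ _ _ ev, where w = "\<lambda>xs. S (length xs) / sqrt d ^ length xs"])
    show "\<forall>x\<in>bethe_verts d k. \<forall>y\<in>bethe_verts d k. 0 \<le> A_alpha \<alpha> (bethe_verts d k) (bethe_adj d k) x y"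
      by (simp add: A_nonneg[OF a0 a1])
    show "\<forall>x\<in>bethe_verts d k. 0 < S (length x) / sqrt (real d) ^ length x"
      using Spos s unfolding bethe_verts_def by auto
    show "\<forall>x\<in>bethe_verts d k. (\<Sum>y\<in>bethe_verts d k. A_alpha \<alpha> (bethe_verts d k) (bethe_adj d k) x y
            * (S (length y) / sqrt (real d) ^ length y)) \<le> up * (S (length x) / sqrt (real d) ^ length x)"
    proof
      fix x assume x: "x \<in> bethe_verts d k"
      define i where "i = length x"
      have i: "i < k" using x unfolding bethe_verts_def i_def by auto
      have cp: "(if i + 1 < k then sqrt d * S (Suc i) else 0) + (if 0 < i then sqrt d * S (i - 1) else 0)
          = 2 * sqrt d * cos \<phi> * S i"
        unfolding S_def \<phi>_def by (rule CP[OF i])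
      have dg: "degl d k i \<le> real d + 1" unfolding degl_def by auto
      have "\<alpha> * degl d k i * S i \<le> \<alpha> * (real d + 1) * S i"
        using dg a0 Spos[OF i] by (intro mult_right_mono mult_left_mono) auto
      hence N: "\<alpha> * degl d k i * S i + (1-\<alpha>) * ((if i + 1 < k then sqrt d * S (Suc i) else 0)
                  + (if 0 < i then sqrt d * S (i - 1) else 0)) \<le> up * S i"
        unfolding cp up_def by (simp add: algebra_simps)
      show "(\<Sum>y\<in>bethe_verts d k. A_alpha \<alpha> (bethe_verts d k) (bethe_adj d k) x y
            * (S (length y) / sqrt (real d) ^ length y)) \<le> up * (S (length x) / sqrt (real d) ^ length x)"
        unfolding tree_sum_scaled[OF x d, where T = S] i_def[symmetric]
        using divide_right_mono[OF N, of "sqrt (real d) ^ i"] s by simp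
    qed
  qed
  thus ?thesis unfolding up_def \<phi>_def .
qed

lemma lower_mid:
  assumes d: "d \<ge> 1" and k: "k \<ge> 2" and a0: "0 < \<alpha>" and a1: "\<alpha> < 1"
  shows "\<exists>\<theta>. is_eigenvalue (bethe_verts d k) (A_alpha \<alpha> (bethe_verts d k) (bethe_adj d k)) \<theta>
      \<and> \<theta> > \<alpha> * (real d + 1) + 2 * (1 - \<alpha>) * sqrt (real d) * cos (pi / real k)
             - 20 * \<alpha> * sqrt (real d) / real k ^ 3"
proof -
  define s where "s = sqrt (real d)"
  have s: "s \<ge> 1" unfolding s_def using d by simp
  define h where "h = pi / real k"
  define a where "a i = \<alpha> * degl d k i" for i
  define b where "b = (1 - \<alpha>) * s"
  have b: "b > 0" unfolding b_def using a1 s by simp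
  define t where "t i = sin ((real i + 1) * h)" for i
  define \<sigma> where "\<sigma> = sin h"
  define c where "c = cos h"
  define \<mu>1 where "\<mu>1 = \<alpha> * (real d + 1) + 2 * (1 - \<alpha>) * s * c - 2 * \<alpha> * \<sigma>^2 / real k"
  have h0: "0 < h" "h < pi" unfolding h_def using k by (auto simp: field_simps)
  have t0: "t 0 = \<sigma>" unfolding t_def \<sigma>_def by simp
  have sig: "\<sigma> > 0" unfolding \<sigma>_def using h0 by (intro sin_gt_zero) auto
  have sq: "(\<Sum>i<k. t i ^ 2) = real k / 2" unfolding t_def h_def by (rule sumsq[OF k])
  have pr: "2 * (\<Sum>i<k-1. t i * t (Suc i)) = real k * c" unfolding t_def h_def c_def by (rule sumprod[OF k])
  have dgpt: "degl d k i * t i ^ 2 = (real d + 1) * t i ^ 2 - (if i = 0 then t i ^ 2 else 0)" if i: "i < k" for i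
  proof (cases "i = 0")
    case True thus ?thesis using k unfolding degl_def by (simp add: algebra_simps)
  next
    case False
    hence i0: "i \<noteq> 0" .
    show ?thesis
    proof (cases "i + 1 < k")
      case True thus ?thesis using i0 unfolding degl_def by simp
    next
      case False
      hence "i + 1 = k" using i by simp
      hence "(real i + 1) * h = pi" unfolding h_def using k by (auto simp: field_simps)
      hence "t i = 0" unfolding t_def by simp
      thus ?thesis using i0 by simp
    qed
  qed
  have sdg: "(\<Sum>i<k. degl d k i * t i ^ 2) = (real d + 1) * (real k / 2) - \<sigma>^2"
  proof -
    have "(\<Sum>i<k. degl d k i * t i ^ 2) = (\<Sum>i<k. (real d + 1) * t i ^ 2 - (if i = 0 then t i ^ 2 else 0))"
      using dgpt by (intro sum.cong) auto
    also have "\<dots> = (real d + 1) * (\<Sum>i<k. t i ^ 2) - (\<Sum>i<k. (if i = 0 then t i ^ 2 else 0))"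
      by (simp add: sum_subtractf sum_distrib_left)
    also have "(\<Sum>i<k. (if i = 0 then t i ^ 2 else 0)) = t 0 ^ 2" using k by (simp add: sum.delta)
    finally show ?thesis using sq t0 by simp
  qed
  have G: "(\<Sum>i<k. (\<mu>1 - a i) * t i ^ 2) - 2*b*(\<Sum>i<k-1. t i * t (Suc i)) \<le> 0"
  proof -
    have "(\<Sum>i<k. (\<mu>1 - a i) * t i ^ 2) = \<mu>1 * (\<Sum>i<k. t i ^ 2) - \<alpha> * (\<Sum>i<k. degl d k i * t i ^ 2)"
      unfolding a_def by (simp add: sum_subtractf sum_distrib_left algebra_simps)
    also have "\<dots> = \<mu>1 * (real k / 2) - \<alpha> * ((real d + 1) * (real k / 2) - \<sigma>^2)" using sq sdg by simp
    finally have e1: "(\<Sum>i<k. (\<mu>1 - a i) * t i ^ 2) = \<mu>1 * (real k / 2) - \<alpha> * ((real d + 1) * (real k / 2) - \<sigma>^2)" .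
    have e2: "2*b*(\<Sum>i<k-1. t i * t (Suc i)) = b * (real k * c)" using pr by (simp add: algebra_simps)
    have "\<mu>1 * (real k / 2) - \<alpha> * ((real d + 1) * (real k / 2) - \<sigma>^2) - b * (real k * c) = 0"
      unfolding \<mu>1_def b_def using k by (simp add: field_simps)
    thus ?thesis unfolding e1 e2 by linarith
  qed
  have k1: "k \<ge> 1" using k by simp
  obtain \<theta> where th: "\<theta> \<ge> \<mu>1" "qq a b (Suc k) \<theta> = 0"
    using sturm_eig[OF b k1, of t \<mu>1 a] t0 sig G by auto
  define T where "T i = qq a b (Suc i) \<theta>" for i
  have ev: "is_eigenvalue (bethe_verts d k) (A_alpha \<alpha> (bethe_verts d k) (bethe_adj d k)) \<theta>"
  proof (rule lift_eig[OF d])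
    show "\<exists>i<k. T i \<noteq> 0" using k unfolding T_def by (intro exI[of _ 0]) auto
    show "\<forall>i<k. \<alpha> * degl d k i * T i + (1 - \<alpha>) * ((if i + 1 < k then sqrt (real d) * T (Suc i) else 0)
              + (if 0 < i then sqrt (real d) * T (i - 1) else 0)) = \<theta> * T i"
    proof (intro allI impI)
      fix i assume i: "i < k"
      have r3: "qq a b (Suc (Suc i)) \<theta> = ((\<theta> - a i) * qq a b (Suc i) \<theta> - b * qq a b i \<theta>) / b"
        by (rule qq.simps(3))
      hence rec: "b * qq a b (Suc (Suc i)) \<theta> = (\<theta> - a i) * qq a b (Suc i) \<theta> - b * qq a b i \<theta>"
        using b by (simp del: qq.simps add: field_simps)
      have C: "(if i + 1 < k then sqrt (real d) * T (Suc i) else 0) = s * qq a b (Suc (Suc i)) \<theta>"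
      proof (cases "i + 1 < k")
        case True thus ?thesis unfolding T_def s_def by simp
      next
        case False hence "Suc (Suc i) = Suc k" using i by simp
        thus ?thesis using th(2) False by simp
      qed
      have P: "(if 0 < i then sqrt (real d) * T (i - 1) else 0) = s * qq a b i \<theta>"
      proof (cases "0 < i")
        case True thus ?thesis unfolding T_def s_def by simp
      next
        case False thus ?thesis by simp
      qed
      show "\<alpha> * degl d k i * T i + (1 - \<alpha>) * ((if i + 1 < k then sqrt (real d) * T (Suc i) else 0)
              + (if 0 < i then sqrt (real d) * T (i - 1) else 0)) = \<theta> * T i"
        unfolding C P using rec unfolding T_def a_def b_def by (simp del: qq.simps add: algebra_simps)
    qed
  qed
  have "\<sigma> \<le> h" unfolding \<sigma>_def using sin_x_le_x[of h] h0 by simp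
  hence "\<sigma> * real k \<le> pi" unfolding h_def using k by (simp add: field_simps)
  hence "(\<sigma> * real k)^2 \<le> pi^2" using sig k by (intro power_mono) auto
  moreover have "\<sigma>^2 * real k ^ 2 = (\<sigma> * real k)^2" by (simp add: power_mult_distrib)
  moreover have "pi^2 = pi * pi" by (simp add: power2_eq_square)
  ultimately have sk: "\<sigma>^2 * real k ^ 2 < 10" using pi_sq_lt by linarith
  have kp: "real k > 0" using k by simp
  have "2 * \<alpha> * \<sigma>^2 / real k = 2 * \<alpha> * (\<sigma>^2 * real k ^ 2) / real k ^ 3"
    using kp by (simp add: field_simps power2_eq_square power3_eq_cube)
  also have "\<dots> < 2 * \<alpha> * 10 / real k ^ 3"
    using sk a0 kp by (intro divide_strict_right_mono mult_strict_left_mono) auto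
  also have "\<dots> \<le> 20 * \<alpha> * s / real k ^ 3"
    using s a0 kp by (intro divide_right_mono) auto
  finally have "\<mu>1 > \<alpha> * (real d + 1) + 2 * (1 - \<alpha>) * sqrt (real d) * cos (pi / real k)
             - 20 * \<alpha> * sqrt (real d) / real k ^ 3" unfolding \<mu>1_def s_def c_def h_def by simp
  thus ?thesis using ev th(1) by force
qed

lemma lower_exists:
  assumes d: "d \<ge> 1" and k: "k \<ge> 2" and a0: "0 \<le> \<alpha>" and a1: "\<alpha> \<le> 1"
  shows "\<exists>\<theta>. is_eigenvalue (bethe_verts d k) (A_alpha \<alpha> (bethe_verts d k) (bethe_adj d k)) \<theta>
      \<and> \<theta> > \<alpha> * (real d + 1) + 2 * (1 - \<alpha>) * sqrt (real d) * cos (pi / real k)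
             - 20 * \<alpha> * sqrt (real d) / real k ^ 3"
proof -
  have s: "sqrt (real d) \<ge> 1" using d by simp
  consider "\<alpha> = 0" | "\<alpha> = 1" | "0 < \<alpha> \<and> \<alpha> < 1" using a0 a1 by linarith
  thus ?thesis
  proof cases
    case 1
    define \<phi> where "\<phi> = pi / real (k+1)"
    define S where "S i = sin ((real i + 1) * \<phi>)" for i
    define \<theta> where "\<theta> = 2 * sqrt (real d) * cos \<phi>"
    have ev: "is_eigenvalue (bethe_verts d k) (A_alpha \<alpha> (bethe_verts d k) (bethe_adj d k)) \<theta>"
    proof (rule lift_eig[OF d])
      have pk0: "0 < pi * real k" using k by (intro mult_pos_pos) auto
      have "0 < (real 0 + 1) * \<phi>" "(real 0 + 1) * \<phi> < pi" unfolding \<phi>_def using pk0 by (auto simp: field_simps)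
      hence "S 0 > 0" unfolding S_def by (intro sin_gt_zero) auto
      thus "\<exists>i<k. S i \<noteq> 0" using k by (intro exI[of _ 0]) auto
      show "\<forall>i<k. \<alpha> * degl d k i * S i + (1 - \<alpha>) * ((if i + 1 < k then sqrt (real d) * S (Suc i) else 0)
              + (if 0 < i then sqrt (real d) * S (i - 1) else 0)) = \<theta> * S i"
      proof (intro allI impI)
        fix i assume i: "i < k"
        have cp: "(if i + 1 < k then sqrt d * S (Suc i) else 0) + (if 0 < i then sqrt d * S (i - 1) else 0)
          = 2 * sqrt d * cos \<phi> * S i"
          unfolding S_def \<phi>_def by (rule CP[OF i])
        show "\<alpha> * degl d k i * S i + (1 - \<alpha>) * ((if i + 1 < k then sqrt (real d) * S (Suc i) else 0)
              + (if 0 < i then sqrt (real d) * S (i - 1) else 0)) = \<theta> * S i"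
          using 1 cp unfolding \<theta>_def by simp
      qed
    qed
    have kp: "real k > 0" using k by simp
    have pk: "0 < pi * real k" using kp by simp
    have "cos (pi / real k) < cos \<phi>" unfolding \<phi>_def using k kp pk
      by (subst cos_mono_less_eq) (auto simp: field_simps intro!: mult_pos_pos)
    hence "\<theta> > \<alpha> * (real d + 1) + 2 * (1 - \<alpha>) * sqrt (real d) * cos (pi / real k)
             - 20 * \<alpha> * sqrt (real d) / real k ^ 3" unfolding \<theta>_def using 1 s by simp
    thus ?thesis using ev by blast
  next
    case 2
    show ?thesis
    proof (cases "k = 2")
      case True
      define T where "T i = (if i = 0 then 1 else 0::real)" for i :: nat
      have ev: "is_eigenvalue (bethe_verts d k) (A_alpha \<alpha> (bethe_verts d k) (bethe_adj d k)) (real d)"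
      proof (rule lift_eig[OF d])
        show "\<exists>i<k. T i \<noteq> 0" using k unfolding T_def by (intro exI[of _ 0]) auto
        show "\<forall>i<k. \<alpha> * degl d k i * T i + (1 - \<alpha>) * ((if i + 1 < k then sqrt (real d) * T (Suc i) else 0)
              + (if 0 < i then sqrt (real d) * T (i - 1) else 0)) = real d * T i"
          using 2 True unfolding T_def degl_def by auto
      qed
      have "real d > \<alpha> * (real d + 1) + 2 * (1 - \<alpha>) * sqrt (real d) * cos (pi / real k)
             - 20 * \<alpha> * sqrt (real d) / real k ^ 3" using 2 True s by (simp; linarith)
      thus ?thesis using ev by blast
    next
      case False
      hence k3: "k \<ge> 3" using k by simp
      define T where "T i = (if i = 1 then 1 else 0::real)" for i :: nat
      have ev: "is_eigenvalue (bethe_verts d k) (A_alpha \<alpha> (bethe_verts d k) (bethe_adj d k)) (real d + 1)"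
      proof (rule lift_eig[OF d])
        show "\<exists>i<k. T i \<noteq> 0" using k3 unfolding T_def by (intro exI[of _ 1]) auto
        show "\<forall>i<k. \<alpha> * degl d k i * T i + (1 - \<alpha>) * ((if i + 1 < k then sqrt (real d) * T (Suc i) else 0)
              + (if 0 < i then sqrt (real d) * T (i - 1) else 0)) = (real d + 1) * T i"
          using 2 k3 unfolding T_def degl_def by auto
      qed
      have kp: "real k ^ 3 > 0" using k by simp
      have "20 * sqrt (real d) / real k ^ 3 > 0" using s kp by simp
      hence "real d + 1 > \<alpha> * (real d + 1) + 2 * (1 - \<alpha>) * sqrt (real d) * cos (pi / real k)
             - 20 * \<alpha> * sqrt (real d) / real k ^ 3" using 2 by simp
      thus ?thesis using ev by blast
    qed
  next
    case 3
    thus ?thesis using lower_mid[OF d k] by blast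
  qed
qed

theorem mainTheorem13:
  fixes d k :: nat and \<alpha> :: real
  assumes "d \<ge> 1" and "k \<ge> 2" and "0 \<le> \<alpha>" and "\<alpha> \<le> 1"
  shows "largest_eigenvalue (bethe_verts d k) (A_alpha \<alpha> (bethe_verts d k) (bethe_adj d k))
           \<le> \<alpha> * (real d + 1) + 2 * (1 - \<alpha>) * sqrt (real d) * cos (pi / real (k + 1))
       \<and> largest_eigenvalue (bethe_verts d k) (A_alpha \<alpha> (bethe_verts d k) (bethe_adj d k))
           > \<alpha> * (real d + 1) + 2 * (1 - \<alpha>) * sqrt (real d) * cos (pi / real k)
             - 20 * \<alpha> * sqrt (real d) / real k ^ 3"
proof -
  let ?V = "bethe_verts d k" and ?M = "A_alpha \<alpha> (bethe_verts d k) (bethe_adj d k)"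
  define EV where "EV = {\<mu>. is_eigenvalue ?V ?M \<mu>}"
  have fin: "finite EV" unfolding EV_def by (rule eigenvalues_finite[OF bethe_finite])
  obtain \<theta> where th: "is_eigenvalue ?V ?M \<theta>" "\<theta> > \<alpha> * (real d + 1) + 2 * (1 - \<alpha>) * sqrt (real d) * cos (pi / real k)
             - 20 * \<alpha> * sqrt (real d) / real k ^ 3"
    using lower_exists[OF assms] by blast
  have ne: "EV \<noteq> {}" using th unfolding EV_def by auto
  have "Max EV \<in> EV" using fin ne by (rule Max_in)
  hence "Max EV \<le> \<alpha> * (real d + 1) + 2 * (1 - \<alpha>) * sqrt (real d) * cos (pi / real (k + 1))"
    using upper_bound[OF assms] unfolding EV_def by auto
  moreover have "\<theta> \<le> Max EV" using fin th unfolding EV_def by auto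
  ultimately show ?thesis using th unfolding largest_eigenvalue_def EV_def[symmetric] by linarith
qed

end
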